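(* Consider the primal linear program $$\rho=\inf_{v\in\mathscr C(\mathcal Q)}\int_{\mathcal Q} v(q)\,dq\quad\text{s.t. } v(q)-x\ge 0\ \text{for all }(q,x,y)\in\mathcal Z,$$ and the dual linear program $$\rho^*=\sup_{\mu\in\mathscr M^+(\mathcal Z)}\int_{\mathcal Z} x\,d\mu(q,x,y)\quad\text{s.t. }\int_{\mathcal Z} q^\alpha\,d\mu=\int_{\mathcal Q} q^\alpha\,dq\ \text{ for all }\alpha\in\mathbb N^n .$$ Then the supremum in the dual program is attained, and there is no duality gap: $\rho=\rho^*$.
   Context: Let $n\ge1$, $\mathcal Q=[-1,1]^n=\{q\in\mathbb R^n: 1-q_j^2\ge0,\ j=1,\dots,n\}$, and $dq$ denote Lebesgue measure. Let $m\ge1$ and $p(q,s)=\sum_{k=0}^m p_k(q)s^k$ with $p_k\in\mathbb R[q]$ and $p_m\equiv1$, where $q\in\mathcal Q$ and $s\in\mathbb C$. Writing $s=x+iy$ with $x,y\in\mathbb R$, define the real polynomials $p_\Re,p_\Im\in\mathbb R[q,x,y]$ by $p(q,x+iy)=p_\Re(q,x,y)+i\,p_\Im(q,x,y)$. Let $\mathcal Z=\{(q,x,y)\in\mathbb R^n\times\mathbb R^2: q\in\mathcal Q,\ p_\Re(q,x,y)=p_\Im(q,x,y)=0\}$ (a compact set). $\mathscr C(\mathcal Q)$ denotes the continuous real functions on $\mathcal Q$, $\mathscr M^+(\mathcal Z)$ the cone of finite nonnegative Borel measures supported on $\mathcal Z$, and $q^\alpha=q_1^{\alpha_1}\cdots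 q_n^{\alpha_n}$. *)

theory Defs
  imports "HOL-Analysis.Analysis"
begin

definition cubeQ :: "(real^'n) set" where
  "cubeQ = {q. \<forall>j. 1 - (q$j)^2 \<ge> 0}"

definition pval :: "nat \<Rightarrow> (nat \<Rightarrow> real^'n \<Rightarrow> real) \<Rightarrow> real^'n \<Rightarrow> complex \<Rightarrow> complex" where
  "pval m p q s = (\<Sum>k\<le>m. complex_of_real (p k q) * s ^ k)"

definition p_Re :: "nat \<Rightarrow> (nat \<Rightarrow> real^'n \<Rightarrow> real) \<Rightarrow> real^'n \<Rightarrow> real \<Rightarrow> real \<Rightarrow> real" where
  "p_Re m p q x y = Re (pval m p q (Complex x y))"

definition p_Im :: "nat \<Rightarrow> (nat \<Rightarrow> real^'n \<Rightarrow> real) \<Rightarrow> real^'n \<Rightarrow> real \<Rightarrow> real \<Rightarrow> real" where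
  "p_Im m p q x y = Im (pval m p q (Complex x y))"

definition zeroSet :: "nat \<Rightarrow> (nat \<Rightarrow> real^'n \<Rightarrow> real) \<Rightarrow> ((real^'n) \<times> real \<times> real) set" where
  "zeroSet m p = {(q,x,y). q \<in> cubeQ \<and> p_Re m p q x y = 0 \<and> p_Im m p q x y = 0}"

definition monom_q :: "('n::finite \<Rightarrow> nat) \<Rightarrow> real^'n \<Rightarrow> real" where
  "monom_q \<alpha> q = (\<Prod>j\<in>UNIV. (q$j) ^ (\<alpha> j))"

definition primal_value :: "nat \<Rightarrow> (nat \<Rightarrow> real^'n \<Rightarrow> real) \<Rightarrow> ereal" where
  "primal_value m p = Inf {ereal (LINT q:cubeQ|lborel. v q) | v.
      continuous_on cubeQ v \<and> (\<forall>(q,x,y)\<in>zeroSet m p. v q - x \<ge> 0)}"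

definition meas_on_Z :: "nat \<Rightarrow> (nat \<Rightarrow> real^'n \<Rightarrow> real) \<Rightarrow> ((real^'n) \<times> real \<times> real) measure \<Rightarrow> bool" where
  "meas_on_Z m p \<mu> \<longleftrightarrow> sets \<mu> = sets borel \<and> finite_measure \<mu> \<and>
      emeasure \<mu> (- zeroSet m p) = 0"

definition dual_feasible :: "nat \<Rightarrow> (nat \<Rightarrow> (real^'n::finite) \<Rightarrow> real) \<Rightarrow> ((real^'n) \<times> real \<times> real) measure \<Rightarrow> bool" where
  "dual_feasible m p \<mu> \<longleftrightarrow> meas_on_Z m p \<mu> \<and>
      (\<forall>\<alpha>::'n \<Rightarrow> nat. (\<integral>z. monom_q \<alpha> (fst z) \<partial>\<mu>) = (LINT q:cubeQ|lborel. monom_q \<alpha> q))"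

definition dual_objective :: "((real^'n) \<times> real \<times> real) measure \<Rightarrow> real" where
  "dual_objective \<mu> = (\<integral>z. fst (snd z) \<partial>\<mu>)"

definition dual_value :: "nat \<Rightarrow> (nat \<Rightarrow> (real^'n::finite) \<Rightarrow> real) \<Rightarrow> ereal" where
  "dual_value m p = Sup {ereal (dual_objective \<mu>) | \<mu>. dual_feasible m p \<mu>}"

end

theory Submission
  imports Defs "HOL-Computational_Algebra.Fundamental_Theorem_Algebra"
begin

lemma pval_factor:
  fixes p :: "nat \<Rightarrow> real^'n \<Rightarrow> real"
  assumes "p m = (\<lambda>q. 1)"
  shows "\<exists>r. \<forall>s. pval m p q s = (\<Prod>i<m. s - r i)"
proof -
  define P :: "complex poly" where "P = (\<Sum>k\<le>m. monom (complex_of_real (p k q)) k)"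
  have ev: "poly P s = pval m p q s" for s
    by (simp add: P_def pval_def poly_sum poly_monom)
  have co: "coeff P k = (if k \<le> m then complex_of_real (p k q) else 0)" for k
    by (simp add: P_def coeff_sum coeff_monom)
  have dm: "degree P = m"
  proof (rule antisym)
    show "degree P \<le> m" by (rule degree_le) (simp add: co)
    show "m \<le> degree P" by (rule le_degree) (simp add: co assms)
  qed
  have lc: "lead_coeff P = 1" using dm co assms by simp
  obtain r where r: "smult (lead_coeff P) (\<Prod>i<degree P. [:-r i, 1:]) = P"
    by (rule complex_poly_decompose')
  have "pval m p q s = (\<Prod>i<m. s - r i)" for s
  proof -
    have "pval m p q s = poly P s" by (simp add: ev)
    also have "\<dots> = poly (smult (lead_coeff P) (\<Prod>i<degree P. [:-r i, 1:])) s" by (simp only: r)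
    also have "\<dots> = (\<Prod>i<m. s - r i)" by (simp add: dm co assms poly_prod)
    finally show ?thesis .
  qed
  then show ?thesis by blast
qed


lemma pval_split:
  fixes p :: "nat \<Rightarrow> real^'n \<Rightarrow> real"
  assumes "p m = (\<lambda>q. 1)"
  shows "pval m p q s = (\<Sum>k<m. complex_of_real (p k q) * s ^ k) + s ^ m"
  using assms by (simp add: pval_def lessThan_Suc_atMost[symmetric])

lemma cauchy_bound:
  fixes p :: "nat \<Rightarrow> real^'n \<Rightarrow> real"
  assumes pm: "p m = (\<lambda>q. 1)" and m1: "m \<ge> 1" and z: "pval m p q s = 0"
  shows "norm s \<le> 1 + (\<Sum>k<m. \<bar>p k q\<bar>)"
proof (cases "norm s \<le> 1")
  case True
  have "0 \<le> (\<Sum>k<m. \<bar>p k q\<bar>)" by (intro sum_nonneg) auto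
  with True show ?thesis by linarith
next
  case False
  define C where "C = (\<Sum>k<m. \<bar>p k q\<bar>)"
  have eq: "s ^ m = - (\<Sum>k<m. complex_of_real (p k q) * s ^ k)"
    using z pval_split[of p m q s, OF pm] by (simp add: add_eq_0_iff)
  have "norm s ^ m = norm (\<Sum>k<m. complex_of_real (p k q) * s ^ k)"
    by (metis eq norm_minus_cancel norm_power)
  also have "\<dots> \<le> (\<Sum>k<m. \<bar>p k q\<bar> * norm s ^ k)"
    by (rule order_trans[OF norm_sum]) (simp add: norm_mult norm_power)
  also have "\<dots> \<le> (\<Sum>k<m. \<bar>p k q\<bar> * norm s ^ (m - 1))"
  proof (intro sum_mono mult_left_mono)
    fix k assume "k \<in> {..<m}"
    then show "norm s ^ k \<le> norm s ^ (m - 1)"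
      using False by (intro power_increasing) auto
  qed auto
  also have "\<dots> = C * norm s ^ (m - 1)" by (simp add: C_def sum_distrib_right)
  finally have "norm s * norm s ^ (m - 1) \<le> C * norm s ^ (m - 1)"
    using m1 by (metis One_nat_def Suc_pred less_eq_Suc_le power_Suc)
  moreover have "norm s ^ (m - 1) > 0" using False by (intro zero_less_power) auto
  ultimately have "norm s \<le> C" by simp
  then show ?thesis unfolding C_def by linarith
qed

lemma near_root:
  fixes p :: "nat \<Rightarrow> real^'n \<Rightarrow> real"
  assumes pm: "p m = (\<lambda>q. 1)" and e: "e > 0" and small: "norm (pval m p q s) < e ^ m"
  shows "\<exists>t. pval m p q t = 0 \<and> norm (s - t) < e"
proof -
  obtain r where r: "\<And>s. pval m p q s = (\<Prod>i<m. s - r i)"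
    using pval_factor[of p m q, OF pm] by blast
  show ?thesis
  proof (rule ccontr)
    assume "\<not> ?thesis"
    moreover have "pval m p q (r i) = 0" if "i < m" for i
      using that by (force simp: r)
    ultimately have ge: "e \<le> norm (s - r i)" if "i < m" for i
      using that by (meson not_less)
    have "e ^ m = (\<Prod>i<m. e)" by simp
    also have "\<dots> \<le> (\<Prod>i<m. norm (s - r i))"
      by (rule prod_mono) (use e ge in auto)
    also have "\<dots> = norm (pval m p q s)" by (simp add: r prod_norm)
    finally show False using small by simp
  qed
qed

lemma pval_diff:
  fixes p :: "nat \<Rightarrow> real^'n \<Rightarrow> real"
  shows "norm (pval m p q s - pval m p q' s) \<le> (\<Sum>k\<le>m. \<bar>p k q - p k q'\<bar> * norm s ^ k)"
proof -
  have "pval m p q s - pval m p q' s = (\<Sum>k\<le>m. complex_of_real (p k q - p k q') * s ^ k)"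
    by (simp add: pval_def sum_subtractf[symmetric] algebra_simps)
  also have "norm \<dots> \<le> (\<Sum>k\<le>m. \<bar>p k q - p k q'\<bar> * norm s ^ k)"
    by (rule order_trans[OF norm_sum]) (simp add: norm_mult norm_power del: of_real_diff)
  finally show ?thesis .
qed



lemma cubeQ_eq: "cubeQ = cbox (- 1) (1 :: real^'n)"
proof -
  have aux: "1 - t^2 \<ge> 0 \<longleftrightarrow> -1 \<le> t \<and> t \<le> 1" for t :: real
    using abs_square_le_1[of t] by auto
  have aux2: "t^2 \<le> 1 \<longleftrightarrow> -1 \<le> t \<and> t \<le> 1" for t :: real
    using aux by simp
  show ?thesis unfolding cubeQ_def mem_box_cart set_eq_iff mem_Collect_eq
    by (simp add: aux2 vector_uminus_component)
qed

lemma compact_cubeQ: "compact cubeQ"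
  by (simp add: cubeQ_eq)

lemma closed_cubeQ: "closed cubeQ"
  by (simp add: cubeQ_eq closed_cbox)

lemma cubeQ_borel[measurable]: "cubeQ \<in> sets borel"
  by (simp add: cubeQ_eq)

definition mrep :: "(real^'n \<Rightarrow> real) \<Rightarrow> bool" where
  "mrep g \<longleftrightarrow> (\<exists>A c. finite A \<and> (\<forall>q. g q = (\<Sum>\<alpha>\<in>A. c \<alpha> * monom_q \<alpha> q)))"

lemma monom_add: "monom_q (\<lambda>k. \<alpha> k + \<beta> k) q = monom_q \<alpha> q * monom_q \<beta> q"
  by (simp add: monom_q_def power_add prod.distrib)

lemma monom_zero: "monom_q (\<lambda>_. 0) q = 1"
  by (simp add: monom_q_def)

lemma monom_unit: "monom_q (\<lambda>k. if k = j then 1 else 0) q = q $ j"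
proof -
  have "monom_q (\<lambda>k. if k = j then 1 else 0) q = (\<Prod>k\<in>UNIV. if k = j then q $ k else 1)"
    unfolding monom_q_def by (intro prod.cong) auto
  also have "\<dots> = q $ j" by simp
  finally show ?thesis .
qed

lemma rpf_mrep:
  fixes g :: "real^'n \<Rightarrow> real"
  assumes "real_polynomial_function g"
  shows "mrep g"
  using assms
proof induct
  case (linear f)
  define e where "e j = (\<lambda>k. if k = j then 1 else (0::nat))" for j :: 'n
  define c where "c \<alpha> = f (\<chi> k. of_nat (\<alpha> k))" for \<alpha> :: "'n \<Rightarrow> nat"
  have inj: "inj e"
  proof (rule injI)
    fix i j assume "e i = e j"
    then have "e i i = e j i" by simp
    then show "i = j" by (simp add: e_def split: if_splits)
  qed
  have ce: "c (e j) = f (axis j 1)" for j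
    unfolding c_def e_def axis_def by (rule arg_cong[where f=f]) (simp add: vec_eq_iff)
  have "f q = (\<Sum>\<alpha>\<in>range e. c \<alpha> * monom_q \<alpha> q)" for q
  proof -
    have "f q = f (\<Sum>j\<in>UNIV. q $ j *\<^sub>R axis j 1)"
      using basis_expansion[of q] by (simp add: scalar_mult_eq_scaleR)
    also have "\<dots> = (\<Sum>j\<in>UNIV. q $ j * f (axis j 1))"
    proof -
      have lf: "linear f" using linear.hyps bounded_linear.linear by blast
      show ?thesis by (simp add: linear_sum[OF lf] linear_scale[OF lf] o_def)
    qed
    also have "\<dots> = (\<Sum>j\<in>UNIV. c (e j) * monom_q (e j) q)"
    proof -
      have me: "monom_q (e j) q = q $ j" for j unfolding e_def by (rule monom_unit)
      show ?thesis by (simp add: ce me mult.commute)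
    qed
    also have "\<dots> = (\<Sum>\<alpha>\<in>range e. c \<alpha> * monom_q \<alpha> q)"
      by (simp add: sum.reindex[OF inj])
    finally show ?thesis .
  qed
  moreover have "finite (range e)" by simp
  ultimately show ?case unfolding mrep_def by (intro exI[of _ "range e"] exI[of _ c]) auto
next
  case (const c)
  have "c = (\<Sum>\<alpha>\<in>{\<lambda>_. 0}. (\<lambda>_. c) \<alpha> * monom_q \<alpha> q)" for q
    by (simp add: monom_zero)
  then show ?case unfolding mrep_def by (intro exI[of _ "{\<lambda>_. 0}"] exI[of _ "\<lambda>_. c"]) auto
next
  case (add f g)
  then obtain A c B d where A: "finite A" "\<And>q. f q = (\<Sum>\<alpha>\<in>A. c \<alpha> * monom_q \<alpha> q)"
    and B: "finite B" "\<And>q. g q = (\<Sum>\<alpha>\<in>B. d \<alpha> * monom_q \<alpha> q)"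
    unfolding mrep_def by blast
  define c' where "c' \<alpha> = (if \<alpha> \<in> A then c \<alpha> else 0) + (if \<alpha> \<in> B then d \<alpha> else 0)" for \<alpha>
  have "f q + g q = (\<Sum>\<alpha>\<in>A \<union> B. c' \<alpha> * monom_q \<alpha> q)" for q
  proof -
    have "(\<Sum>\<alpha>\<in>A \<union> B. c' \<alpha> * monom_q \<alpha> q) =
        (\<Sum>\<alpha>\<in>A \<union> B. if \<alpha> \<in> A then c \<alpha> * monom_q \<alpha> q else 0) +
        (\<Sum>\<alpha>\<in>A \<union> B. if \<alpha> \<in> B then d \<alpha> * monom_q \<alpha> q else 0)"
      unfolding c'_def sum.distrib[symmetric] by (intro sum.cong refl) (auto simp: distrib_right)
    also have "\<dots> = (\<Sum>\<alpha>\<in>(A \<union> B) \<inter> A. c \<alpha> * monom_q \<alpha> q) + (\<Sum>\<alpha>\<in>(A \<union> B) \<inter> B. d \<alpha> * monom_q \<alpha> q)"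
      using A(1) B(1) by (simp add: sum.inter_restrict[symmetric])
    also have "\<dots> = f q + g q" by (simp add: A B Int_absorb1)
    finally show ?thesis by simp
  qed
  then show ?case unfolding mrep_def using A(1) B(1) by (intro exI[of _ "A \<union> B"] exI[of _ c']) auto
next
  case (mult f g)
  then obtain A c B d where A: "finite A" "\<And>q. f q = (\<Sum>\<alpha>\<in>A. c \<alpha> * monom_q \<alpha> q)"
    and B: "finite B" "\<And>q. g q = (\<Sum>\<alpha>\<in>B. d \<alpha> * monom_q \<alpha> q)"
    unfolding mrep_def by blast
  define S where "S = A \<times> B"
  define s where "s x = (\<lambda>k. fst x k + snd x k)" for x :: "('n \<Rightarrow> nat) \<times> ('n \<Rightarrow> nat)"
  define e where "e y = (\<Sum>x\<in>{x \<in> S. s x = y}. c (fst x) * d (snd x))" for y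
  have fS: "finite S" using A B by (simp add: S_def)
  have "f q * g q = (\<Sum>y\<in>s ` S. e y * monom_q y q)" for q
  proof -
    have "f q * g q = (\<Sum>x\<in>S. c (fst x) * d (snd x) * monom_q (s x) q)"
      by (simp add: A B S_def s_def sum_product sum.cartesian_product monom_add mult_ac case_prod_beta')
    also have "\<dots> = (\<Sum>y\<in>s ` S. \<Sum>x\<in>{x \<in> S. s x = y}. c (fst x) * d (snd x) * monom_q (s x) q)"
      by (rule sum.group[symmetric]) (use fS in auto)
    also have "\<dots> = (\<Sum>y\<in>s ` S. e y * monom_q y q)"
      unfolding e_def sum_distrib_right by (intro sum.cong refl) auto
    finally show ?thesis .
  qed
  then show ?case unfolding mrep_def using fS by (intro exI[of _ "s ` S"] exI[of _ e]) auto
qed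


lemma cont_monom: "continuous_on S (monom_q \<alpha>)"
  unfolding monom_q_def by (intro continuous_intros)

lemma monom_bound:
  fixes q :: "real^'n"
  shows "q \<in> cubeQ \<Longrightarrow> \<bar>monom_q \<alpha> q\<bar> \<le> 1"
proof -
  assume q: "q \<in> cubeQ"
  have bnd: "\<bar>q $ j\<bar> \<le> 1" for j
    using q unfolding cubeQ_def by (simp add: abs_square_le_1)
  have "(\<Prod>j\<in>UNIV. \<bar>q $ j\<bar> ^ \<alpha> j) \<le> (\<Prod>j\<in>(UNIV::'n set). (1::real))"
    by (rule prod_mono) (use bnd in \<open>auto intro: power_le_one\<close>)
  then show ?thesis by (simp add: monom_q_def abs_prod power_abs)
qed

lemma cont_bounded_cube:
  fixes h :: "real^'n \<Rightarrow> real"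
  assumes "continuous_on cubeQ h"
  obtains B where "\<And>q. q \<in> cubeQ \<Longrightarrow> \<bar>h q\<bar> \<le> B"
proof -
  have "bounded (h ` cubeQ)"
    by (intro compact_imp_bounded compact_continuous_image assms compact_cubeQ)
  then obtain B where "\<forall>x\<in>h ` cubeQ. norm x \<le> B" unfolding bounded_iff by blast
  then show ?thesis using that by auto
qed

lemma set_int_cube:
  fixes h :: "real^'n \<Rightarrow> real"
  shows "continuous_on cubeQ h \<Longrightarrow> set_integrable lborel cubeQ h"
  unfolding set_integrable_def by (rule borel_integrable_compact[OF compact_cubeQ])

locale zmeas =
  fixes \<mu> :: "((real^'n) \<times> real \<times> real) measure"
  assumes sets_mu: "sets \<mu> = sets borel" and fin: "finite_measure \<mu>"
    and aecube: "AE z in \<mu>. fst z \<in> cubeQ"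
begin

interpretation finite_measure \<mu> by (rule fin)

lemma sp: "space \<mu> = UNIV"
  using sets_eq_imp_space_eq[OF sets_mu] by simp

lemma meas_fst: "h \<in> borel_measurable borel \<Longrightarrow> (\<lambda>z. h (fst z)) \<in> borel_measurable \<mu>"
proof -
  assume h: "h \<in> borel_measurable borel"
  have "fst \<in> borel_measurable (borel :: ((real^'n) \<times> real \<times> real) measure)"
    by (intro borel_measurable_continuous_onI continuous_intros)
  then have "(\<lambda>z. h (fst z)) \<in> borel_measurable (borel :: ((real^'n) \<times> real \<times> real) measure)"
    using h by (rule measurable_compose)
  then show ?thesis by (metis measurable_cong_sets sets_mu)
qed

lemma int_fst:
  fixes h :: "real^'n \<Rightarrow> real" and B :: real
  assumes "h \<in> borel_measurable borel" "\<And>q. q \<in> cubeQ \<Longrightarrow> \<bar>h q\<bar> \<le> B"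
  shows "integrable \<mu> (\<lambda>z. h (fst z))"
proof (rule integrable_const_bound[where B=B])
  show "AE z in \<mu>. norm (h (fst z)) \<le> B" using aecube by eventually_elim (use assms in auto)
  show "(\<lambda>z. h (fst z)) \<in> borel_measurable \<mu>" using assms(1) by (rule meas_fst)
qed

lemma int_monom: "integrable \<mu> (\<lambda>z. monom_q \<alpha> (fst z))"
  by (rule int_fst[where B=1]) (auto intro: borel_measurable_continuous_onI cont_monom monom_bound)

lemma moment_mrep:
  assumes mom: "\<And>\<alpha>. (\<integral>z. monom_q \<alpha> (fst z) \<partial>\<mu>) = (LINT q:cubeQ|lborel. monom_q \<alpha> q)"
    and g: "mrep g"
  shows "(\<integral>z. g (fst z) \<partial>\<mu>) = (LINT q:cubeQ|lborel. g q)"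
proof -
  obtain A c where A: "finite A" "\<And>q. g q = (\<Sum>\<alpha>\<in>A. c \<alpha> * monom_q \<alpha> q)"
    using g unfolding mrep_def by blast
  have "(\<integral>z. g (fst z) \<partial>\<mu>) = (\<Sum>\<alpha>\<in>A. c \<alpha> * (\<integral>z. monom_q \<alpha> (fst z) \<partial>\<mu>))"
  proof -
    have "(\<integral>z. g (fst z) \<partial>\<mu>) = (\<Sum>\<alpha>\<in>A. \<integral>z. c \<alpha> * monom_q \<alpha> (fst z) \<partial>\<mu>)"
      unfolding A by (rule Bochner_Integration.integral_sum) (auto intro: int_monom integrable_mult_right)
    then show ?thesis by (simp add: integral_mult_right_zero)
  qed
  also have "\<dots> = (\<Sum>\<alpha>\<in>A. c \<alpha> * (LINT q:cubeQ|lborel. monom_q \<alpha> q))"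
    by (simp add: mom)
  also have "\<dots> = (LINT q:cubeQ|lborel. g q)"
  proof -
    have i: "integrable lborel (\<lambda>q. indicator cubeQ q *\<^sub>R monom_q \<alpha> q)" for \<alpha>
      using set_int_cube[OF cont_monom] unfolding set_integrable_def by blast
    have "(LINT q:cubeQ|lborel. g q) = (\<integral>q. (\<Sum>\<alpha>\<in>A. c \<alpha> * (indicator cubeQ q *\<^sub>R monom_q \<alpha> q)) \<partial>lborel)"
      unfolding set_lebesgue_integral_def A
      by (intro Bochner_Integration.integral_cong refl) (simp add: sum_distrib_left mult_ac)
    also have "\<dots> = (\<Sum>\<alpha>\<in>A. c \<alpha> * (LINT q:cubeQ|lborel. monom_q \<alpha> q))"
      unfolding set_lebesgue_integral_def
      by (subst Bochner_Integration.integral_sum) (auto intro: i i[simplified] integrable_mult_right simp: integral_mult_right_zero)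
    finally show ?thesis by simp
  qed
  finally show ?thesis .
qed


lemma moment_cont:
  fixes v :: "real^'n \<Rightarrow> real"
  assumes mom: "\<And>\<alpha>. (\<integral>z. monom_q \<alpha> (fst z) \<partial>\<mu>) = (LINT q:cubeQ|lborel. monom_q \<alpha> q)"
    and vc: "continuous_on cubeQ v"
  shows "(\<integral>z. indicator cubeQ (fst z) * v (fst z) \<partial>\<mu>) = (LINT q:cubeQ|lborel. v q)"
proof -
  define X where "X = (\<integral>z. indicator cubeQ (fst z) * v (fst z) \<partial>\<mu>)"
  define Y where "Y = (LINT q:cubeQ|lborel. v q)"
  define M1 where "M1 = measure \<mu> (space \<mu>)"
  define M2 where "M2 = measure lborel (cubeQ :: (real^'n) set)"
  have M1: "M1 \<ge> 0" "M2 \<ge> 0" by (auto simp: M1_def M2_def)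
  have v'm: "(\<lambda>q. indicator cubeQ q * v q) \<in> borel_measurable borel"
    using borel_measurable_continuous_on_indicator[OF cubeQ_borel vc] by simp
  obtain Bv where Bv: "\<And>q. q \<in> cubeQ \<Longrightarrow> \<bar>v q\<bar> \<le> Bv" using cont_bounded_cube[OF vc] by blast
  have intv: "integrable \<mu> (\<lambda>z. indicator cubeQ (fst z) * v (fst z))"
    by (rule int_fst[OF v'm, where B=Bv]) (use Bv in auto)
  have fin2: "emeasure lborel (cubeQ :: (real^'n) set) \<noteq> \<infinity>" using emeasure_compact_finite[OF compact_cubeQ] by (simp add: less_top)
  have key: "\<bar>X - Y\<bar> \<le> e * (M1 + M2)" if e: "e > 0" for e
  proof -
    obtain g where g: "real_polynomial_function g" "\<And>q. q \<in> cubeQ \<Longrightarrow> \<bar>v q - g q\<bar> < e"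
      using Stone_Weierstrass_real_polynomial_function[OF compact_cubeQ vc e] by blast
    have gc: "continuous_on S g" for S
      using g(1) continuous_real_polymonial_function continuous_at_imp_continuous_on by blast
    have gm: "g \<in> borel_measurable borel" by (rule borel_measurable_continuous_onI[OF gc])
    obtain Bg where Bg: "\<And>q. q \<in> cubeQ \<Longrightarrow> \<bar>g q\<bar> \<le> Bg" using cont_bounded_cube[OF gc] by blast
    have intg: "integrable \<mu> (\<lambda>z. g (fst z))" by (rule int_fst[OF gm Bg])
    have intge: "integrable \<mu> (\<lambda>z. g (fst z) + c)" for c
      using intg by (intro Bochner_Integration.integrable_add) auto
    have Ig: "(\<integral>z. g (fst z) + c \<partial>\<mu>) = (\<integral>z. g (fst z) \<partial>\<mu>) + M1 * c" for c
      using intg by (subst Bochner_Integration.integral_add) (auto simp: M1_def)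
    have gmom: "(\<integral>z. g (fst z) \<partial>\<mu>) = (LINT q:cubeQ|lborel. g q)"
      by (rule moment_mrep[OF mom rpf_mrep[OF g(1)]])
    have ae1: "AE z in \<mu>. indicator cubeQ (fst z) * v (fst z) \<le> g (fst z) + e"
      using aecube by eventually_elim (use g(2) in force)
    have ae2: "AE z in \<mu>. g (fst z) + (- e) \<le> indicator cubeQ (fst z) * v (fst z)"
      using aecube by eventually_elim (use g(2) in force)
    have X1: "X \<le> (\<integral>z. g (fst z) + e \<partial>\<mu>)"
      unfolding X_def by (rule integral_mono_AE[OF intv intge ae1])
    have X2: "(\<integral>z. g (fst z) + (- e) \<partial>\<mu>) \<le> X"
      unfolding X_def by (rule integral_mono_AE[OF intge intv ae2])
    have sg: "set_integrable lborel cubeQ g" by (rule set_int_cube[OF gc])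
    have sv: "set_integrable lborel cubeQ v" by (rule set_int_cube[OF vc])
    have sc: "set_integrable lborel cubeQ (\<lambda>_. c)" for c :: real
      by (rule set_int_cube) (rule continuous_on_const)
    have Lg: "(LINT q:cubeQ|lborel. g q + c) = (LINT q:cubeQ|lborel. g q) + M2 * c" for c
    proof -
      have cb: "(cubeQ :: (real^'n) set) \<in> sets lborel" by simp
      have c1: "(LINT q:(cubeQ :: (real^'n) set)|lborel. c) = M2 * c"
        using set_integral_const[OF cb fin2, of c] by (simp add: M2_def)
      show ?thesis using set_integral_add(2)[OF sg sc[of c]] c1 by simp
    qed
    have Y1: "Y \<le> (LINT q:cubeQ|lborel. g q + e)"
      unfolding Y_def
      by (rule set_integral_mono[OF sv set_integral_add(1)[OF sg sc]]) (use g(2) in force)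
    have Y2: "(LINT q:cubeQ|lborel. g q + (- e)) \<le> Y"
      unfolding Y_def
      by (rule set_integral_mono[OF set_integral_add(1)[OF sg sc] sv]) (use g(2) in force)
    show ?thesis
      using X1 X2 Y1 Y2 Ig[of e] Ig[of "-e"] Lg[of e] Lg[of "-e"] gmom
      by (simp add: abs_le_iff algebra_simps)
  qed
  have "\<bar>X - Y\<bar> \<le> 0 + e" if e: "e > 0" for e
  proof -
    have "\<bar>X - Y\<bar> \<le> (e / (M1 + M2 + 1)) * (M1 + M2)" using key[of "e / (M1 + M2 + 1)"] e M1 by simp
    also have "\<dots> \<le> e" using e M1 by (simp add: field_simps)
    finally show ?thesis by simp
  qed
  then have "\<bar>X - Y\<bar> \<le> 0" by (rule field_le_epsilon)
  then show ?thesis unfolding X_def Y_def by simp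
qed

end

locale LPsetup =
  fixes m :: nat and p :: "nat \<Rightarrow> real^'n \<Rightarrow> real"
  assumes m1: "m \<ge> 1" and polyf: "\<And>k. k \<le> m \<Longrightarrow> real_polynomial_function (p k)"
    and pm: "p m = (\<lambda>q. 1)"
begin

definition roots :: "real^'n \<Rightarrow> complex set" where
  "roots q = {s. pval m p q s = 0}"

lemma roots_finite_ne: "finite (roots q) \<and> roots q \<noteq> {}"
proof -
  obtain r where r: "\<And>s. pval m p q s = (\<Prod>i<m. s - r i)"
    using pval_factor[of p m q, OF pm] by blast
  have "roots q = r ` {..<m}" by (auto simp: roots_def r)
  moreover have "r 0 \<in> r ` {..<m}" using m1 by auto
  ultimately show ?thesis by auto
qed

definition F :: "real^'n \<Rightarrow> real" where
  "F q = Max (Re ` roots q)"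

lemma F_ge: "pval m p q s = 0 \<Longrightarrow> Re s \<le> F q"
  unfolding F_def using roots_finite_ne[of q] by (intro Max_ge) (auto simp: roots_def)

lemma F_att: "\<exists>s. pval m p q s = 0 \<and> Re s = F q"
proof -
  have "F q \<in> Re ` roots q" unfolding F_def using roots_finite_ne[of q] by (intro Max_in) auto
  then show ?thesis by (auto simp: roots_def)
qed

lemma cont_p: "k \<le> m \<Longrightarrow> isCont (p k) q"
  using polyf continuous_real_polymonial_function by blast

lemma F_cont: "isCont F q0"
  unfolding continuous_at_eps_delta
proof (intro allI impI)
  fix e :: real assume e: "e > 0"
  define h where "h q = (\<Sum>k<m. \<bar>p k q\<bar>)" for q
  define R where "R = 2 + h q0"
  define D where "D q = (\<Sum>k\<le>m. \<bar>p k q - p k q0\<bar> * R ^ k)" for q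
  have "isCont h q0" unfolding h_def by (auto intro!: continuous_intros cont_p)
  then obtain d1 where d1: "d1 > 0" "\<And>q. dist q q0 < d1 \<Longrightarrow> dist (h q) (h q0) < 1"
    unfolding continuous_at_eps_delta by (meson zero_less_one)
  have "isCont D q0" unfolding D_def by (auto intro!: continuous_intros cont_p)
  moreover have "e ^ m > 0" using e by simp
  ultimately obtain d2 where d2: "d2 > 0" "\<And>q. dist q q0 < d2 \<Longrightarrow> dist (D q) (D q0) < e ^ m"
    unfolding continuous_at_eps_delta by meson
  have D0: "D q0 = 0" by (simp add: D_def)
  have h0: "h q \<ge> 0" for q unfolding h_def by (intro sum_nonneg) auto
  show "\<exists>d>0. \<forall>q. dist q q0 < d \<longrightarrow> dist (F q) (F q0) < e"
  proof (intro exI[of _ "min d1 d2"] conjI allI impI)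
    show "min d1 d2 > 0" using d1 d2 by simp
    fix q assume dq: "dist q q0 < min d1 d2"
    have hq: "h q \<le> 1 + h q0" using d1(2)[of q] dq by (simp add: dist_real_def)
    have Dq: "D q < e ^ m" using d2(2)[of q] dq D0 by (simp add: dist_real_def)
    have Rb: "norm s \<le> R" if "pval m p q' s = 0" "q' = q \<or> q' = q0" for s q'
      using cauchy_bound[OF pm m1 that(1)] that(2) hq h0[of q0] unfolding R_def h_def by auto
    have Dge: "norm (pval m p q s - pval m p q0 s) \<le> D q" if "norm s \<le> R" for s
    proof -
      have "norm (pval m p q s - pval m p q0 s) \<le> (\<Sum>k\<le>m. \<bar>p k q - p k q0\<bar> * norm s ^ k)"
        by (rule pval_diff)
      also have "\<dots> \<le> D q" unfolding D_def
        by (intro sum_mono mult_left_mono power_mono that) auto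
      finally show ?thesis .
    qed
    obtain s0 where s0: "pval m p q0 s0 = 0" "Re s0 = F q0" using F_att by blast
    have "norm (pval m p q s0) < e ^ m"
      using Dge[OF Rb[OF s0(1)]] s0(1) Dq by simp
    then obtain t where t: "pval m p q t = 0" "norm (s0 - t) < e"
      using near_root[where p=p and m=m, OF pm e] by blast
    have "Re s0 - Re t < e" using t(2) abs_Re_le_cmod[of "s0 - t"] by simp
    then have A: "F q0 - F q < e" using F_ge[OF t(1)] s0 by simp
    obtain s1 where s1: "pval m p q s1 = 0" "Re s1 = F q" using F_att by blast
    have "norm (pval m p q0 s1) < e ^ m"
      using Dge[OF Rb[OF s1(1)]] s1(1) Dq by (simp add: norm_minus_commute)
    then obtain t1 where t1: "pval m p q0 t1 = 0" "norm (s1 - t1) < e"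
      using near_root[where p=p and m=m, OF pm e] by blast
    have "Re s1 - Re t1 < e" using t1(2) abs_Re_le_cmod[of "s1 - t1"] by simp
    then have B: "F q - F q0 < e" using F_ge[OF t1(1)] s1 by simp
    show "dist (F q) (F q0) < e" using A B by (simp add: dist_real_def)
  qed
qed


lemma F_cont_on: "continuous_on S F"
  using F_cont continuous_at_imp_continuous_on by blast

lemma F_meas: "F \<in> borel_measurable borel"
  by (rule borel_measurable_continuous_onI[OF F_cont_on])

definition G :: "real^'n \<Rightarrow> real" where
  "G q = Min (Im ` {s \<in> roots q. Re s = F q})"

lemma G_set: "finite (Im ` {s \<in> roots q. Re s = F q}) \<and> Im ` {s \<in> roots q. Re s = F q} \<noteq> {}"
  using roots_finite_ne[of q] F_att[of q] by (auto simp: roots_def)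

lemma G_att: "pval m p q (Complex (F q) (G q)) = 0"
proof -
  have "G q \<in> Im ` {s \<in> roots q. Re s = F q}" unfolding G_def using G_set by (intro Min_in) auto
  then obtain s where "s \<in> roots q" "Re s = F q" "Im s = G q" by auto
  then have "s = Complex (F q) (G q)" by (simp add: complex_eq_iff)
  with \<open>s \<in> roots q\<close> show ?thesis by (simp add: roots_def)
qed

lemma G_le_iff: "G q \<le> c \<longleftrightarrow> (\<exists>s. pval m p q s = 0 \<and> Re s = F q \<and> Im s \<le> c)"
  unfolding G_def using G_set[of q] by (auto simp: Min_le_iff roots_def)

lemma cont_pval: "continuous_on S (\<lambda>z. pval m p (fst z) (snd z))"
proof -
  have c: "continuous_on S (\<lambda>z. p k (fst z))" if "k \<le> m" for k
    by (rule continuous_on_compose2[of UNIV "p k" S fst])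
       (auto intro!: continuous_at_imp_continuous_on cont_p that continuous_intros)
  show ?thesis unfolding pval_def
    by (intro continuous_intros) (auto intro!: continuous_on_of_real c)
qed

lemma G_meas: "G \<in> borel_measurable borel"
  unfolding borel_measurable_iff_le
proof
  fix c :: real
  define K where "K N = {z :: (real^'n) \<times> complex. pval m p (fst z) (snd z) = 0 \<and> Re (snd z) = F (fst z)
     \<and> Im (snd z) \<le> c \<and> norm (fst z) \<le> real N \<and> norm (snd z) \<le> real N}" for N :: nat
  have cl: "closed (K N)" for N
    unfolding K_def
    by (intro closed_Collect_conj closed_Collect_eq closed_Collect_le cont_pval)
       (auto intro!: continuous_intros continuous_on_compose2[OF F_cont_on])
  have bd: "bounded (K N)" for N
  proof -
    have "K N \<subseteq> cball 0 (2 * real N)"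
    proof
      fix z assume z: "z \<in> K N"
      have "norm z \<le> norm (fst z) + norm (snd z)" by (metis norm_Pair_le prod.collapse)
      also have "\<dots> \<le> 2 * real N" using z by (simp add: K_def)
      finally show "z \<in> cball 0 (2 * real N)" by (simp only: mem_cball_0)
    qed
    then show ?thesis using bounded_cball bounded_subset by blast
  qed
  have cp: "compact (fst ` K N)" for N
  proof -
    have "compact (K N)" using cl bd by (simp add: compact_eq_bounded_closed)
    then show ?thesis by (intro compact_continuous_image continuous_on_fst continuous_on_id)
  qed
  have eq: "{w \<in> space borel. G w \<le> c} = (\<Union>N. fst ` K N)"
  proof safe
    fix q assume "q \<in> space borel" "G q \<le> c"
    then obtain s where s: "pval m p q s = 0" "Re s = F q" "Im s \<le> c" using G_le_iff by blast
    define N where "N = nat \<lceil>max (norm q) (norm s)\<rceil>"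
    have "norm q \<le> real N" "norm s \<le> real N" unfolding N_def by linarith+
    then have "(q, s) \<in> K N" using s by (simp add: K_def)
    then show "q \<in> (\<Union>N. fst ` K N)" by force
  next
    fix N z assume "z \<in> K N"
    then show "G (fst z) \<le> c" using G_le_iff by (auto simp: K_def)
  qed auto
  show "{w \<in> space borel. G w \<le> c} \<in> sets borel"
    unfolding eq
  proof (rule sets.countable_UN)
    show "range (\<lambda>N. fst ` K N) \<subseteq> sets borel"
      using cp compact_imp_closed borel_closed by blast
  qed
qed


lemma zs_iff: "z \<in> zeroSet m p \<longleftrightarrow> fst z \<in> cubeQ \<and> pval m p (fst z) (Complex (fst (snd z)) (snd (snd z))) = 0"
  by (cases z) (auto simp: zeroSet_def p_Re_def p_Im_def complex_eq_iff)

lemma closed_zs: "closed (zeroSet m p)"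
proof -
  have c: "continuous_on UNIV (\<lambda>z::(real^'n) \<times> real \<times> real. pval m p (fst z) (Complex (fst (snd z)) (snd (snd z))))"
  proof -
    have e: "(\<lambda>z::(real^'n) \<times> real \<times> real. pval m p (fst z) (Complex (fst (snd z)) (snd (snd z)))) =
      (\<lambda>w. pval m p (fst w) (snd w)) \<circ> (\<lambda>z. (fst z, complex_of_real (fst (snd z)) + \<i> * complex_of_real (snd (snd z))))"
      by (simp add: o_def Complex_eq)
    show ?thesis unfolding e
      by (intro continuous_on_compose continuous_intros cont_pval)
  qed
  have "zeroSet m p = (cubeQ \<times> UNIV) \<inter> {z. pval m p (fst z) (Complex (fst (snd z)) (snd (snd z))) = 0}"
    by (auto simp: zs_iff)
  also have "closed \<dots>"
    by (intro closed_Int closed_Times closed_cubeQ closed_UNIV closed_Collect_eq c continuous_on_const)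
  finally show ?thesis .
qed

lemma xbound: "\<exists>B. \<forall>z\<in>zeroSet m p. \<bar>fst (snd z)\<bar> \<le> B"
proof -
  have "continuous_on cubeQ (\<lambda>q. 1 + (\<Sum>k<m. \<bar>p k q\<bar>))"
    by (intro continuous_intros continuous_at_imp_continuous_on ballI cont_p) auto
  then obtain B where B: "\<And>q. q \<in> cubeQ \<Longrightarrow> \<bar>1 + (\<Sum>k<m. \<bar>p k q\<bar>)\<bar> \<le> B"
    using cont_bounded_cube by blast
  have "\<bar>fst (snd z)\<bar> \<le> B" if "z \<in> zeroSet m p" for z
  proof -
    let ?s = "Complex (fst (snd z)) (snd (snd z))"
    have z: "fst z \<in> cubeQ" "pval m p (fst z) ?s = 0" using that by (auto simp: zs_iff)
    have "\<bar>fst (snd z)\<bar> = \<bar>Re ?s\<bar>" by simp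
    also have "\<dots> \<le> norm ?s" by (rule abs_Re_le_cmod)
    also have "\<dots> \<le> 1 + (\<Sum>k<m. \<bar>p k (fst z)\<bar>)" by (rule cauchy_bound[OF pm m1 z(2)])
    also have "\<dots> \<le> B" using B[OF z(1)] by simp
    finally show ?thesis .
  qed
  then show ?thesis by blast
qed

lemma dual_le:
  assumes df: "dual_feasible m p \<mu>" and vc: "continuous_on cubeQ v"
    and vf: "\<forall>(q,x,y)\<in>zeroSet m p. v q - x \<ge> 0"
  shows "dual_objective \<mu> \<le> (LINT q:cubeQ|lborel. v q)"
proof -
  have sm: "sets \<mu> = sets borel" and fm: "finite_measure \<mu>" and nz: "emeasure \<mu> (- zeroSet m p) = 0"
    and mom: "\<And>\<alpha>. (\<integral>z. monom_q \<alpha> (fst z) \<partial>\<mu>) = (LINT q:cubeQ|lborel. monom_q \<alpha> q)"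
    using df by (auto simp: dual_feasible_def meas_on_Z_def)
  have "- zeroSet m p \<in> sets \<mu>" unfolding sm using closed_zs by (intro borel_open) auto
  then have aeZ: "AE z in \<mu>. z \<in> zeroSet m p"
    by (intro AE_I'[of "- zeroSet m p"]) (auto simp: nz null_sets_def)
  have aecube: "AE z in \<mu>. fst z \<in> cubeQ" using aeZ by eventually_elim (auto simp: zs_iff)
  interpret zmeas \<mu> by (rule zmeas.intro[OF sm fm aecube])
  interpret finite_measure \<mu> by (rule fm)
  obtain B where B: "\<forall>z\<in>zeroSet m p. \<bar>fst (snd z)\<bar> \<le> B" using xbound by blast
  have xm: "(\<lambda>z. fst (snd z)) \<in> borel_measurable \<mu>"
  proof -
    have "(\<lambda>z::(real^'n) \<times> real \<times> real. fst (snd z)) \<in> borel_measurable borel"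
      by (intro borel_measurable_continuous_onI continuous_intros)
    then show ?thesis by (metis measurable_cong_sets sm)
  qed
  have intx: "integrable \<mu> (\<lambda>z. fst (snd z))"
    by (rule integrable_const_bound[where B=B]) (use aeZ B xm in \<open>auto elim!: AE_mp\<close>)
  have v'm: "(\<lambda>q. indicator cubeQ q * v q) \<in> borel_measurable borel"
    using borel_measurable_continuous_on_indicator[OF cubeQ_borel vc] by simp
  obtain Bv where Bv: "\<And>q. q \<in> cubeQ \<Longrightarrow> \<bar>v q\<bar> \<le> Bv" using cont_bounded_cube[OF vc] by blast
  have intv: "integrable \<mu> (\<lambda>z. indicator cubeQ (fst z) * v (fst z))"
    by (rule int_fst[OF v'm, where B=Bv]) (use Bv in auto)
  have ae: "AE z in \<mu>. fst (snd z) \<le> indicator cubeQ (fst z) * v (fst z)"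
    using aeZ
  proof eventually_elim
    case (elim z)
    then have "fst z \<in> cubeQ" by (simp add: zs_iff)
    moreover have "v (fst z) - fst (snd z) \<ge> 0" using vf elim by (cases z) auto
    ultimately show ?case by simp
  qed
  have "dual_objective \<mu> \<le> (\<integral>z. indicator cubeQ (fst z) * v (fst z) \<partial>\<mu>)"
    unfolding dual_objective_def by (rule integral_mono_AE[OF intx intv ae])
  also have "\<dots> = (LINT q:cubeQ|lborel. v q)" by (rule moment_cont[OF mom vc])
  finally show ?thesis .
qed


definition M0 :: "(real^'n) measure" where
  "M0 = density lborel (\<lambda>q. ennreal (indicator cubeQ q))"

definition T :: "real^'n \<Rightarrow> (real^'n) \<times> real \<times> real" where
  "T q = (q, F q, G q)"

definition mu0 :: "((real^'n) \<times> real \<times> real) measure" where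
  "mu0 = distr M0 borel T"

lemma T_meas: "T \<in> measurable M0 borel"
proof -
  have "T \<in> borel_measurable borel"
    unfolding T_def using F_meas G_meas by measurable
  then show ?thesis by (metis measurable_cong_sets M0_def sets_density sets_lborel)
qed

lemma T_in: "q \<in> cubeQ \<Longrightarrow> T q \<in> zeroSet m p"
  using G_att by (simp add: zs_iff T_def)

lemma int_M0:
  fixes h :: "real^'n \<Rightarrow> real"
  assumes "h \<in> borel_measurable borel"
  shows "(\<integral>q. h q \<partial>M0) = (LINT q:cubeQ|lborel. h q)"
  unfolding M0_def set_lebesgue_integral_def
  by (rule integral_density) (use assms in auto)

lemma mu0_feasible: "dual_feasible m p mu0"
proof -
  have sm: "sets mu0 = sets borel" by (simp add: mu0_def)
  have em: "emeasure mu0 (space mu0) \<noteq> \<infinity>"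
  proof -
    have "emeasure mu0 (space mu0) = emeasure M0 (T -` space mu0 \<inter> space M0)"
      unfolding mu0_def by (rule emeasure_distr[OF T_meas]) simp
    also have "\<dots> = emeasure M0 UNIV" by (simp add: M0_def mu0_def)
    also have "\<dots> = emeasure lborel (cubeQ :: (real^'n) set)"
      unfolding M0_def by (subst emeasure_density) (auto simp: ennreal_indicator)
    also have "\<dots> < \<infinity>" by (rule emeasure_compact_finite[OF compact_cubeQ])
    finally show ?thesis by simp
  qed
  have nz: "emeasure mu0 (- zeroSet m p) = 0"
  proof -
    have zb: "- zeroSet m p \<in> sets borel" using closed_zs by (intro borel_open) auto
    have "emeasure mu0 (- zeroSet m p) = emeasure M0 (T -` (- zeroSet m p) \<inter> space M0)"
      unfolding mu0_def by (rule emeasure_distr[OF T_meas zb])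
    also have "\<dots> \<le> emeasure M0 (- cubeQ)"
      by (rule emeasure_mono) (auto simp: M0_def, metis T_in)
    also have "\<dots> = 0"
    proof -
      have e0: "(\<lambda>x. ennreal (indicator cubeQ x) * indicator (- cubeQ) x) = (\<lambda>_::real^'n. 0)"
        by (auto simp: indicator_def fun_eq_iff)
      show ?thesis unfolding M0_def by (subst emeasure_density) (auto simp: e0)
    qed
    finally show ?thesis by simp
  qed
  have mom: "(\<integral>z. monom_q \<alpha> (fst z) \<partial>mu0) = (LINT q:cubeQ|lborel. monom_q \<alpha> q)" for \<alpha>
  proof -
    have mb: "monom_q \<alpha> \<in> borel_measurable borel" by (rule borel_measurable_continuous_onI[OF cont_monom])
    have "(\<lambda>z::(real^'n) \<times> real \<times> real. monom_q \<alpha> (fst z)) \<in> borel_measurable borel"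
      by (intro borel_measurable_continuous_onI continuous_on_compose2[OF cont_monom] continuous_intros) auto
    then have "(\<integral>z. monom_q \<alpha> (fst z) \<partial>mu0) = (\<integral>q. monom_q \<alpha> (fst (T q)) \<partial>M0)"
      unfolding mu0_def by (rule integral_distr[OF T_meas])
    also have "\<dots> = (\<integral>q. monom_q \<alpha> q \<partial>M0)" by (simp add: T_def)
    also have "\<dots> = (LINT q:cubeQ|lborel. monom_q \<alpha> q)" by (rule int_M0[OF mb])
    finally show ?thesis .
  qed
  show ?thesis
    unfolding dual_feasible_def meas_on_Z_def using sm em nz mom by (auto intro: finite_measureI)
qed

lemma mu0_obj: "dual_objective mu0 = (LINT q:cubeQ|lborel. F q)"
proof -
  have "(\<lambda>z::(real^'n) \<times> real \<times> real. fst (snd z)) \<in> borel_measurable borel"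
    by (intro borel_measurable_continuous_onI continuous_intros)
  then have "dual_objective mu0 = (\<integral>q. fst (snd (T q)) \<partial>M0)"
    unfolding mu0_def dual_objective_def by (rule integral_distr[OF T_meas])
  also have "\<dots> = (\<integral>q. F q \<partial>M0)" by (simp add: T_def)
  also have "\<dots> = (LINT q:cubeQ|lborel. F q)" by (rule int_M0[OF F_meas])
  finally show ?thesis .
qed

lemma F_feasible: "\<forall>(q,x,y)\<in>zeroSet m p. F q - x \<ge> 0"
proof (clarify)
  fix q x y assume "(q, x, y) \<in> zeroSet m p"
  then have "pval m p q (Complex x y) = 0" by (simp add: zs_iff)
  from F_ge[OF this] show "F q - x \<ge> 0" by simp
qed

lemma main:
  "(\<exists>\<mu>. dual_feasible m p \<mu> \<and> ereal (dual_objective \<mu>) = dual_value m p)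
    \<and> primal_value m p = dual_value m p"
proof -
  define I where "I = (LINT q:cubeQ|lborel. F q)"
  have P: "primal_value m p \<le> ereal I"
    unfolding primal_value_def I_def
    by (rule Inf_lower) (use F_cont_on F_feasible in blast)
  have D: "ereal I \<le> dual_value m p"
    unfolding dual_value_def
    by (rule Sup_upper) (auto intro!: exI[of _ mu0] simp: mu0_feasible mu0_obj I_def)
  have DP: "dual_value m p \<le> primal_value m p"
    unfolding dual_value_def primal_value_def
  proof (rule Sup_least)
    fix a assume "a \<in> {ereal (dual_objective \<mu>) |\<mu>. dual_feasible m p \<mu>}"
    then obtain \<mu> where mu: "a = ereal (dual_objective \<mu>)" "dual_feasible m p \<mu>" by blast
    show "a \<le> Inf {ereal (LINT q:cubeQ|lborel. v q) | v.
      continuous_on cubeQ v \<and> (\<forall>(q,x,y)\<in>zeroSet m p. v q - x \<ge> 0)}"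
    proof (rule Inf_greatest)
      fix b assume "b \<in> {ereal (LINT q:cubeQ|lborel. v q) | v.
        continuous_on cubeQ v \<and> (\<forall>(q,x,y)\<in>zeroSet m p. v q - x \<ge> 0)}"
      then obtain v where v: "b = ereal (LINT q:cubeQ|lborel. v q)" "continuous_on cubeQ v"
        "\<forall>(q,x,y)\<in>zeroSet m p. v q - x \<ge> 0" by blast
      show "a \<le> b" using dual_le[OF mu(2) v(2) v(3)] mu(1) v(1) by simp
    qed
  qed
  have eq1: "dual_value m p = ereal I" using P D DP by simp
  have eq2: "primal_value m p = ereal I" using P D DP by simp
  show ?thesis using mu0_feasible mu0_obj eq1 eq2 I_def by auto
qed

end

theorem lemma1:
  fixes m :: nat and p :: "nat \<Rightarrow> real^'n \<Rightarrow> real"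
  assumes "m \<ge> 1"
    and "\<And>k. k \<le> m \<Longrightarrow> real_polynomial_function (p k)"
    and "p m = (\<lambda>q. 1)"
  shows "(\<exists>\<mu>. dual_feasible m p \<mu> \<and> ereal (dual_objective \<mu>) = dual_value m p)
         \<and> primal_value m p = dual_value m p"
proof -
  interpret LPsetup m p by (rule LPsetup.intro) (use assms in auto)
  show ?thesis by (rule main)
qed

end
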